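(* Let $\lambda>0$, define the entire function $A(\lambda, z) = \left( \frac{\sin \pi z}{\pi} \right)\sum_{n=0}^{\infty} (-1)^n\frac{ e^{-\lambda n}}{z-n}$, and $B(w) = - \frac{e^w}{e^w + 1}$ for real $w$. If $\Re(z) < 0$ then $$A(\lambda, z) = \left( \frac{\sin \pi z}{\pi} \right) \int_0^{\infty} B(\lambda + w) \, e^{z w} \,\mathrm{d}w,$$ and if $\Re(z) >0$ then $$A(\lambda, z) = e^{-\lambda z} - \left( \frac{\sin \pi z}{\pi} \right) \int_{-\infty}^{0} B(\lambda + w) \, e^{z w} \,\mathrm{d}w.$$ *)

theory Defs
  imports "HOL-Analysis.Analysis"
begin

definition A_series :: "real \<Rightarrow> complex \<Rightarrow> complex" where
  "A_series lam z =
     (sin (complex_of_real pi * z) / complex_of_real pi) *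
     (\<Sum>n. (-1) ^ n * complex_of_real (exp (- lam * real n)) / (z - of_nat n))"

text \<open>The entire function A(lam, .): the series formula off the nonnegative integers,
  extended by continuity (its limit) at the removable singularities z = n.\<close>
definition A :: "real \<Rightarrow> complex \<Rightarrow> complex" where
  "A lam z = (if z \<in> range (of_nat :: nat \<Rightarrow> complex)
              then Lim (at z) (A_series lam) else A_series lam z)"

definition B :: "real \<Rightarrow> real" where
  "B w = - exp w / (exp w + 1)"

end

theory Submission
  imports Defs
begin


lemma exp_int_interval:
  fixes c :: complex and a b :: real
  assumes "c \<noteq> 0" "a \<le> b"
  shows "((\<lambda>w::real. exp (c * complex_of_real w)) has_integral
           ((exp (c * of_real b) - exp (c * of_real a)) / c)) {a..b}"
proof -
  have "((\<lambda>w::real. exp (c * complex_of_real w) / c) has_vector_derivative exp (c * complex_of_real x)) (at x within {a..b})" for x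
  proof -
    have "((\<lambda>t. exp (c * t) / c) has_field_derivative exp (c * of_real x)) (at (of_real x))"
      using assms by (auto intro!: derivative_eq_intros)
    from has_vector_derivative_real_field[OF this] show ?thesis by simp
  qed
  from fundamental_theorem_of_calculus[OF assms(2) this]
  show ?thesis by (simp add: diff_divide_distrib)
qed

lemma exp_int_ge:
  fixes c :: complex and a :: real
  assumes "Re c < 0"
  shows "((\<lambda>w::real. exp (c * complex_of_real w)) has_integral (- exp (c * of_real a) / c)) {a..}"
proof -
  have c0: "c \<noteq> 0" using assms by auto
  define f where "f k w = (if w \<in> {a..a + real k} then exp (c * complex_of_real w) else 0)" for k :: nat and w
  have fi: "(f k has_integral ((exp (c * of_real (a + real k)) - exp (c * of_real a)) / c)) {a..}" for k
    unfolding f_def using exp_int_interval[OF c0, of a "a + real k"]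
    by (subst has_integral_restrict) auto
  have hint: "(\<lambda>w. exp (- (- Re c) * w)) integrable_on {a..}"
    using integrable_on_exp_minus_to_infinity[of "- Re c" a] assms by simp
  have dc: "(\<lambda>k. integral {a..} (f k)) \<longlonglongrightarrow> integral {a..} (\<lambda>w. exp (c * complex_of_real w))"
        "(\<lambda>w. exp (c * complex_of_real w)) integrable_on {a..}"
  proof -
    have conv: "(\<lambda>k. f k x) \<longlonglongrightarrow> exp (c * complex_of_real x)" if "x \<in> {a..}" for x
    proof -
      have "eventually (\<lambda>k. real k \<ge> x - a) sequentially"
        by (meson eventually_sequentiallyI nat_ceiling_le_eq)
      then have "eventually (\<lambda>k. f k x = exp (c * complex_of_real x)) sequentially"
        by (rule eventually_mono) (use that in \<open>auto simp: f_def\<close>)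
      then show ?thesis by (simp add: tendsto_eventually)
    qed
    have le: "norm (f k x) \<le> exp (- (- Re c) * x)" if "x \<in> {a..}" for k x
      by (auto simp: f_def)
    show "(\<lambda>k. integral {a..} (f k)) \<longlonglongrightarrow> integral {a..} (\<lambda>w. exp (c * complex_of_real w))"
         "(\<lambda>w. exp (c * complex_of_real w)) integrable_on {a..}"
      using dominated_convergence[of f "{a..}" "\<lambda>w. exp (- (- Re c) * w)", OF _ hint le conv] fi
      by (auto simp: integrable_on_def)
  qed
  have "(\<lambda>k. integral {a..} (f k)) = (\<lambda>k. (exp (c * of_real (a + real k)) - exp (c * of_real a)) / c)"
    using fi by (intro ext integral_unique) blast
  moreover have "(\<lambda>k. (exp (c * of_real (a + real k)) - exp (c * of_real a)) / c) \<longlonglongrightarrow> (0 - exp (c * of_real a)) / c"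
  proof (intro tendsto_intros)
    have "(\<lambda>k. exp (Re c * (a + real k))) \<longlonglongrightarrow> 0"
      using assms by real_asymp
    then show "(\<lambda>k. exp (c * of_real (a + real k))) \<longlonglongrightarrow> 0"
      by (subst tendsto_norm_zero_iff[symmetric]) simp
  qed (rule c0)
  ultimately show ?thesis using dc
    by (metis LIMSEQ_unique diff_0 has_integral_integrable_integral)
qed

lemma exp_real_int_le:
  fixes d b :: real
  assumes "d > 0"
  shows "(\<lambda>w. exp (d * w)) integrable_on {..b}"
proof -
  define f where "f k w = (if w \<in> {b - real k..b} then exp (d * w) else 0)" for k :: nat and w
  have iv: "((\<lambda>w. exp (d * w)) has_integral (exp (d * b) / d - exp (d * (b - real k)) / d)) {b - real k..b}" for k
    using assms
    by (intro fundamental_theorem_of_calculus)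
       (auto intro!: derivative_eq_intros simp flip: has_real_derivative_iff_has_vector_derivative)
  have fi: "(f k has_integral (exp (d * b) / d - exp (d * (b - real k)) / d)) {..b}" for k
    unfolding f_def using iv[of k] by (subst has_integral_restrict) auto
  have "(\<lambda>w. exp (d * w)) integrable_on {..b} \<and> (\<lambda>k. integral {..b} (f k)) \<longlonglongrightarrow> integral {..b} (\<lambda>w. exp (d * w))"
  proof (rule monotone_convergence_increasing[of f])
    show "f k integrable_on {..b}" for k using fi by blast
    show "f k x \<le> f (Suc k) x" if "x \<in> {..b}" for k x
      by (auto simp: f_def)
    show "(\<lambda>k. f k x) \<longlonglongrightarrow> exp (d * x)" if "x \<in> {..b}" for x
    proof -
      have "eventually (\<lambda>k. real k \<ge> b - x) sequentially"
        by (meson eventually_sequentiallyI nat_ceiling_le_eq)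
      then have "eventually (\<lambda>k. f k x = exp (d * x)) sequentially"
        by (rule eventually_mono) (use that in \<open>auto simp: f_def\<close>)
      then show ?thesis by (simp add: tendsto_eventually)
    qed
    have "norm (integral {..b} (f k)) \<le> exp (d * b) / d" for k
    proof -
      have "exp (d * (b - real k)) \<le> exp (d * b)" using assms by (simp add: mult_left_mono)
      moreover have "exp (d * (b - real k)) > 0" by simp
      ultimately show ?thesis using fi[of k] assms by (simp add: integral_unique divide_right_mono abs_le_iff)
    qed
    then show "bounded (range (\<lambda>k. integral {..b} (f k)))"
      by (metis (no_types, lifting) boundedI rangeE)
  qed
  then show ?thesis by blast
qed

lemma exp_int_le:
  fixes c :: complex and b :: real
  assumes "Re c > 0"
  shows "((\<lambda>w::real. exp (c * complex_of_real w)) has_integral (exp (c * of_real b) / c)) {..b}"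
proof -
  have c0: "c \<noteq> 0" using assms by auto
  define f where "f k w = (if w \<in> {b - real k..b} then exp (c * complex_of_real w) else 0)" for k :: nat and w
  have fi: "(f k has_integral ((exp (c * of_real b) - exp (c * of_real (b - real k))) / c)) {..b}" for k
    unfolding f_def using exp_int_interval[OF c0, of "b - real k" b]
    by (subst has_integral_restrict) auto
  have hint: "(\<lambda>w. exp (Re c * w)) integrable_on {..b}"
    using exp_real_int_le assms by blast
  have dc: "(\<lambda>k. integral {..b} (f k)) \<longlonglongrightarrow> integral {..b} (\<lambda>w. exp (c * complex_of_real w))"
        "(\<lambda>w. exp (c * complex_of_real w)) integrable_on {..b}"
  proof -
    have conv: "(\<lambda>k. f k x) \<longlonglongrightarrow> exp (c * complex_of_real x)" if "x \<in> {..b}" for x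
    proof -
      have "eventually (\<lambda>k. real k \<ge> b - x) sequentially"
        by (meson eventually_sequentiallyI nat_ceiling_le_eq)
      then have "eventually (\<lambda>k. f k x = exp (c * complex_of_real x)) sequentially"
        by (rule eventually_mono) (use that in \<open>auto simp: f_def\<close>)
      then show ?thesis by (simp add: tendsto_eventually)
    qed
    have le: "norm (f k x) \<le> exp (Re c * x)" if "x \<in> {..b}" for k x
      by (auto simp: f_def)
    show "(\<lambda>k. integral {..b} (f k)) \<longlonglongrightarrow> integral {..b} (\<lambda>w. exp (c * complex_of_real w))"
         "(\<lambda>w. exp (c * complex_of_real w)) integrable_on {..b}"
      using dominated_convergence[of f "{..b}" "\<lambda>w. exp (Re c * w)", OF _ hint le conv] fi
      by (auto simp: integrable_on_def)
  qed
  have "(\<lambda>k. integral {..b} (f k)) = (\<lambda>k. (exp (c * of_real b) - exp (c * of_real (b - real k))) / c)"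
    using fi by (intro ext integral_unique) blast
  moreover have "(\<lambda>k. (exp (c * of_real b) - exp (c * of_real (b - real k))) / c) \<longlonglongrightarrow> (exp (c * of_real b) - 0) / c"
  proof (intro tendsto_intros)
    have "(\<lambda>k. exp (Re c * (b - real k))) \<longlonglongrightarrow> 0"
      using assms by real_asymp
    then show "(\<lambda>k. exp (c * of_real (b - real k))) \<longlonglongrightarrow> 0"
      by (subst tendsto_norm_zero_iff[symmetric]) simp
  qed (rule c0)
  ultimately show ?thesis using dc
    by (metis LIMSEQ_unique diff_zero has_integral_integrable_integral)
qed



lemma dig_refl:
  fixes u :: complex
  assumes u: "u \<notin> \<int>"
  shows "Digamma u - Digamma (1 - u) = - of_real pi * cos (of_real pi * u) / sin (of_real pi * u)"
proof -
  have u1: "u \<notin> \<int>\<^sub>\<le>\<^sub>0" using u by (auto elim: nonpos_Ints_cases)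
  have u2: "1 - u \<notin> \<int>\<^sub>\<le>\<^sub>0"
  proof
    assume "1 - u \<in> \<int>\<^sub>\<le>\<^sub>0"
    then have "1 - u \<in> \<int>" by (auto elim: nonpos_Ints_cases)
    then have "1 - (1 - u) \<in> \<int>" by (intro Ints_diff) auto
    with u show False by simp
  qed
  have s: "sin (of_real pi * u) \<noteq> 0"
    using u by (subst sin_eq_0) auto
  have eq: "(\<lambda>t::complex. Gamma t * Gamma (1 - t)) = (\<lambda>t. of_real pi / sin (of_real pi * t))"
    by (rule ext, rule Gamma_reflection_complex)
  have d1: "((\<lambda>t. Gamma t * Gamma (1 - t)) has_field_derivative
      (Gamma u * Digamma u * Gamma (1 - u) - Gamma u * (Gamma (1 - u) * Digamma (1 - u)))) (at u)"
    using u1 u2 by (auto intro!: derivative_eq_intros)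
  have d2: "((\<lambda>t. of_real pi / sin (of_real pi * t)) has_field_derivative
      (- (of_real pi * (cos (of_real pi * u) * of_real pi)) / (sin (of_real pi * u))^2)) (at u)"
    using s by (auto intro!: derivative_eq_intros simp: power2_eq_square)
  have "Gamma u * Digamma u * Gamma (1 - u) - Gamma u * (Gamma (1 - u) * Digamma (1 - u))
        = - (of_real pi * (cos (of_real pi * u) * of_real pi)) / (sin (of_real pi * u))^2"
    using DERIV_unique[OF d1 d2[folded eq]] .
  then have "(Gamma u * Gamma (1 - u)) * (Digamma u - Digamma (1 - u))
        = - (of_real pi * (cos (of_real pi * u) * of_real pi)) / (sin (of_real pi * u))^2"
    by (simp add: algebra_simps)
  then have "(of_real pi / sin (of_real pi * u)) * (Digamma u - Digamma (1 - u))
        = - (of_real pi * (cos (of_real pi * u) * of_real pi)) / (sin (of_real pi * u))^2"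
    by (simp add: Gamma_reflection_complex)
  then have H: "(of_real pi / sin (of_real pi * u)) * (Digamma u - Digamma (1 - u)) * (sin (of_real pi * u) / of_real pi)
        = - (of_real pi * (cos (of_real pi * u) * of_real pi)) / (sin (of_real pi * u))^2 * (sin (of_real pi * u) / of_real pi)"
    by simp
  have "(of_real pi / sin (of_real pi * u)) * (Digamma u - Digamma (1 - u)) * (sin (of_real pi * u) / of_real pi)
     = Digamma u - Digamma (1 - u)" using s by (simp add: field_simps)
  moreover have "- (of_real pi * (cos (of_real pi * u) * of_real pi)) / (sin (of_real pi * u))^2 * (sin (of_real pi * u) / of_real pi)
     = - of_real pi * cos (of_real pi * u) / sin (of_real pi * u)" using s by (simp add: field_simps power2_eq_square)
  ultimately show ?thesis using H by simp
qed

lemma digamma_pair_sums: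
  fixes u v :: complex
  assumes "u \<noteq> 0" "v \<noteq> 0"
  shows "(\<lambda>k. inverse (v + of_nat k) - inverse (u + of_nat k)) sums (Digamma u - Digamma v)"
proof -
  have a: "(\<lambda>k. inverse (of_nat (Suc k)) - inverse (u + of_nat k)) sums (Digamma u + euler_mascheroni)"
    using summable_sums[OF summable_Digamma[OF assms(1)]] by (simp add: Digamma_def)
  have b: "(\<lambda>k. inverse (of_nat (Suc k)) - inverse (v + of_nat k)) sums (Digamma v + euler_mascheroni)"
    using summable_sums[OF summable_Digamma[OF assms(2)]] by (simp add: Digamma_def)
  from sums_diff[OF a b] show ?thesis by simp
qed

lemma sum_even_split:
  fixes f :: "nat \<Rightarrow> 'a::comm_monoid_add"
  shows "(\<Sum>n<2*K. f n) = (\<Sum>j<K. f (2*j) + f (2*j+1))"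
  by (induction K) (simp_all add: add.assoc)

lemma notInts_aux:
  fixes z :: complex
  assumes "z \<notin> \<int>" "a \<in> \<int>" "b \<in> \<int>" "b \<noteq> 0"
  shows "(z + a) / b \<notin> \<int>" 
proof
  assume "(z + a) / b \<in> \<int>"
  then have "(z + a) / b * b - a \<in> \<int>" using assms by (intro Ints_diff Ints_mult) auto
  with assms show False by simp
qed

lemma csc_T:
  fixes z :: complex
  assumes z: "z \<notin> \<int>"
    and T: "(\<lambda>N. \<Sum>n<N. (-1)^n / (z - of_nat n)) \<longlonglongrightarrow> T"
  shows "T = - (Digamma ((1 - z) / 2) - Digamma (- z / 2)) / 2"
proof -
  have nz: "z - of_nat n \<noteq> 0" for n using z by (metis Ints_of_nat right_minus_eq)
  have ne1: "(1 - z) / 2 \<noteq> 0" "- z / 2 \<noteq> 0" using z by (auto simp: Ints_1) 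
  have s: "(\<lambda>j. - (inverse (- z / 2 + of_nat j) - inverse ((1 - z) / 2 + of_nat j)) / 2) sums
      (- (Digamma ((1 - z) / 2) - Digamma (- z / 2)) / 2)"
    using sums_divide[OF sums_minus[OF digamma_pair_sums[OF ne1]], of 2] by simp
  have trm: "(-1)^(2*j) / (z - of_nat (2*j)) + (-1)^(2*j+1) / (z - of_nat (2*j+1)) =
      - (inverse (- z / 2 + of_nat j) - inverse ((1 - z) / 2 + of_nat j)) / 2" for j
  proof -
    have e1: "- z / 2 + of_nat j = - (z - 2 * of_nat j) / 2" by (simp add: algebra_simps)
    have e2: "(1 - z) / 2 + of_nat j = - (z - (2 * of_nat j + 1)) / 2" by (simp add: field_simps)
    have i1: "inverse (- z / 2 + of_nat j) = - 2 / (z - 2 * of_nat j)"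
      unfolding e1 by (metis inverse_divide inverse_minus_eq minus_divide_left)
    have i2: "inverse ((1 - z) / 2 + of_nat j) = - 2 / (z - (2 * of_nat j + 1))"
      unfolding e2 by (metis inverse_divide inverse_minus_eq minus_divide_left)
    show ?thesis unfolding i1 i2 by (simp add: power_mult)
  qed
  have "(\<lambda>K. \<Sum>n<2*K. (-1)^n / (z - of_nat n)) \<longlonglongrightarrow> T"
    using LIMSEQ_subseq_LIMSEQ[OF T, of "\<lambda>K. 2*K"] by (simp add: strict_mono_def o_def)
  moreover have "(\<lambda>K. \<Sum>n<2*K. (-1)^n / (z - of_nat n)) =
      (\<lambda>K. \<Sum>j<K. - (inverse (- z / 2 + of_nat j) - inverse ((1 - z) / 2 + of_nat j)) / 2)"
    by (simp only: sum_even_split trm)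
  ultimately have "(\<lambda>K. \<Sum>j<K. - (inverse (- z / 2 + of_nat j) - inverse ((1 - z) / 2 + of_nat j)) / 2) \<longlonglongrightarrow> T" by simp
  moreover from s have "(\<lambda>K. \<Sum>j<K. - (inverse (- z / 2 + of_nat j) - inverse ((1 - z) / 2 + of_nat j)) / 2) \<longlonglongrightarrow> - (Digamma ((1 - z) / 2) - Digamma (- z / 2)) / 2" by (simp only: sums_def)
  ultimately show ?thesis by (rule LIMSEQ_unique)
qed

lemma half_two_div:
  fixes A :: complex shows "(2 / A) / 2 = 1 / A"
  by (cases "A = 0") (auto simp: field_simps)

lemma csc_U:
  fixes z :: complex
  assumes z: "z \<notin> \<int>"
    and U: "(\<lambda>N. \<Sum>k<N. (-1)^k / (z + 1 + of_nat k)) \<longlonglongrightarrow> U"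
  shows "U = (Digamma ((z + 2) / 2) - Digamma ((z + 1) / 2)) / 2"
proof -
  have ne1: "(z + 2) / 2 \<noteq> 0" "(z + 1) / 2 \<noteq> 0"
  proof -
    have "z \<noteq> -2" "z \<noteq> -1" using z by (metis Ints_minus Ints_numeral Ints_1)+
    then have "z + 2 \<noteq> 0" "z + 1 \<noteq> 0" by (auto simp: eq_neg_iff_add_eq_0)
    then show "(z + 2) / 2 \<noteq> 0" "(z + 1) / 2 \<noteq> 0" by auto
  qed
  have s: "(\<lambda>j. (inverse ((z + 1) / 2 + of_nat j) - inverse ((z + 2) / 2 + of_nat j)) / 2) sums
      ((Digamma ((z + 2) / 2) - Digamma ((z + 1) / 2)) / 2)"
    using sums_divide[OF digamma_pair_sums[OF ne1], of 2] by simp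
  have trm: "(-1)^(2*j) / (z + 1 + of_nat (2*j)) + (-1)^(2*j+1) / (z + 1 + of_nat (2*j+1)) =
      (inverse ((z + 1) / 2 + of_nat j) - inverse ((z + 2) / 2 + of_nat j)) / 2" for j
  proof -
    have e1: "(z + 1) / 2 + of_nat j = (z + 1 + 2 * of_nat j) / 2" by (simp add: field_simps)
    have e2: "(z + 2) / 2 + of_nat j = (z + 1 + (2 * of_nat j + 1)) / 2" by (simp add: field_simps)
    have "(inverse ((z + 1) / 2 + of_nat j) - inverse ((z + 2) / 2 + of_nat j)) / 2
       = (2 / (z + 1 + 2 * of_nat j) - 2 / (z + 1 + (2 * of_nat j + 1))) / 2"
      unfolding e1 e2 inverse_divide ..
    also have "\<dots> = 1 / (z + 1 + 2 * of_nat j) - 1 / (z + 1 + (2 * of_nat j + 1))"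
      by (simp only: diff_divide_distrib half_two_div)
    finally show ?thesis by (simp add: power_mult)
  qed
  have "(\<lambda>K. \<Sum>n<2*K. (-1)^n / (z + 1 + of_nat n)) \<longlonglongrightarrow> U"
    using LIMSEQ_subseq_LIMSEQ[OF U, of "\<lambda>K. 2*K"] by (simp add: strict_mono_def o_def)
  moreover have "(\<lambda>K. \<Sum>n<2*K. (-1)^n / (z + 1 + of_nat n)) =
      (\<lambda>K. \<Sum>j<K. (inverse ((z + 1) / 2 + of_nat j) - inverse ((z + 2) / 2 + of_nat j)) / 2)"
    by (simp only: sum_even_split trm)
  ultimately have "(\<lambda>K. \<Sum>j<K. (inverse ((z + 1) / 2 + of_nat j) - inverse ((z + 2) / 2 + of_nat j)) / 2) \<longlonglongrightarrow> U" by simp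
  moreover from s have "(\<lambda>K. \<Sum>j<K. (inverse ((z + 1) / 2 + of_nat j) - inverse ((z + 2) / 2 + of_nat j)) / 2) \<longlonglongrightarrow> (Digamma ((z + 2) / 2) - Digamma ((z + 1) / 2)) / 2" by (simp only: sums_def)
  ultimately show ?thesis by (rule LIMSEQ_unique)
qed

lemma csc_final:
  fixes z :: complex
  assumes z: "z \<notin> \<int>"
    and T: "(\<lambda>N. \<Sum>n<N. (-1)^n / (z - of_nat n)) \<longlonglongrightarrow> T"
    and U: "(\<lambda>N. \<Sum>k<N. (-1)^k / (z + 1 + of_nat k)) \<longlonglongrightarrow> U"
  shows "T - U = of_real pi / sin (of_real pi * z)"
proof -
  define u1 where "u1 = (z + 1) / 2"
  define u2 where "u2 = (z + 0) / (-2)"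
  have u1: "u1 \<notin> \<int>" unfolding u1_def by (rule notInts_aux[OF z]) auto
  have u2: "u2 \<notin> \<int>" unfolding u2_def by (rule notInts_aux[OF z]) auto
  have r1: "Digamma u1 - Digamma (1 - u1) = - of_real pi * cos (of_real pi * u1) / sin (of_real pi * u1)"
    by (rule dig_refl[OF u1])
  have r2: "Digamma u2 - Digamma (1 - u2) = - of_real pi * cos (of_real pi * u2) / sin (of_real pi * u2)"
    by (rule dig_refl[OF u2])
  have e1: "1 - u1 = (1 - z) / 2" and e2: "1 - u2 = (z + 2) / 2" and e3: "u2 = - z / 2"
    unfolding u1_def u2_def by (simp_all add: field_simps)
  have TU: "T - U = ((Digamma u1 - Digamma (1 - u1)) + (Digamma u2 - Digamma (1 - u2))) / 2"
  proof -
    have Tv: "T = - (Digamma ((1 - z) / 2) - Digamma (- z / 2)) / 2" by (rule csc_T[OF z T])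
    have Uv: "U = (Digamma ((z + 2) / 2) - Digamma ((z + 1) / 2)) / 2" by (rule csc_U[OF z U])
    show ?thesis
      unfolding e1 e2 unfolding e3 u1_def Tv Uv by (simp add: field_simps)
  qed
  define a where "a = of_real pi * z / 2"
  have sa: "sin a \<noteq> 0" unfolding a_def
  proof
    assume "sin (of_real pi * z / 2) = 0"
    then obtain n :: int where "of_real pi * z / 2 = of_real (of_int n * pi)"
      by (auto simp: sin_eq_0)
    then have "z = of_int (2 * n)" by (simp add: field_simps)
    with z show False by simp
  qed
  have ca: "cos a \<noteq> 0" unfolding a_def
  proof
    assume "cos (of_real pi * z / 2) = 0"
    then obtain n :: int where "of_real pi * z / 2 = complex_of_real (of_int n * pi) + of_real pi / 2"
      by (auto simp only: cos_eq_0)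
    then have "z * of_real pi = (1 + of_int (2*n)) * of_real pi" by (simp add: field_simps)
    then have "z = 1 + of_int (2*n)" by (simp only: mult_cancel_right) simp
    then have "z = of_int (2 * n + 1)" by simp
    with z show False by simp
  qed
  have p1: "of_real pi * u1 = a + of_real pi / 2" unfolding u1_def a_def by (simp add: field_simps)
  have p2: "of_real pi * u2 = - a" unfolding u2_def a_def by (simp add: field_simps)
  have sz: "sin (of_real pi * z) = 2 * sin a * cos a"
  proof -
    have "of_real pi * z = 2 * a" unfolding a_def by simp
    then show ?thesis by (simp add: sin_double)
  qed
  have "T - U = ((- of_real pi * (- sin a) / cos a) + (- of_real pi * cos a / (- sin a))) / 2"
    unfolding TU r1 r2 p1 p2 by (simp add: sin_add cos_add)
  also have "\<dots> = of_real pi * (sin a ^ 2 + cos a ^ 2) / (2 * sin a * cos a)"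
    using sa ca by (simp add: field_simps power2_eq_square distrib_left[symmetric] sin_cos_squared_add3)
  also have "\<dots> = of_real pi / sin (of_real pi * z)"
    by (simp add: sz sin_cos_squared_add)
  finally show ?thesis .
qed



lemma geo_bound:
  fixes y :: real
  assumes "0 \<le> y" "y \<le> 1"
  shows "\<bar>\<Sum>k<N. (-y)^k\<bar> \<le> 2"
proof -
  have "-y \<noteq> 1" using assms by simp
  then have e: "(\<Sum>k<N. (-y)^k) = (1 - (-y)^N) / (1 + y)"
    by (subst sum_gp_strict) simp
  have "\<bar>(-y)^N\<bar> \<le> 1" using assms by (simp add: power_abs power_le_one)
  then have "\<bar>1 - (-y)^N\<bar> \<le> 2" by linarith
  moreover have "2 \<le> 2 * (1 + y)" using assms by simp
  ultimately have m: "\<bar>1 - (-y)^N\<bar> \<le> 2 * (1 + y)" by linarith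
  have c: "1 + y > 0" using assms by simp
  have "\<bar>1 - (-y)^N\<bar> / (1 + y) \<le> 2"
    by (subst pos_divide_le_eq[OF c]) (rule m)
  moreover have "\<bar>(1 - (-y)^N) / (1 + y)\<bar> = \<bar>1 - (-y)^N\<bar> / (1 + y)"
    using c by (simp only: abs_divide abs_of_pos)
  ultimately show ?thesis unfolding e by linarith
qed

lemma geo_lim:
  fixes y :: real
  assumes "0 \<le> y" "y < 1"
  shows "(\<lambda>N. \<Sum>k<N. (-y)^k) \<longlonglongrightarrow> 1 / (1 + y)"
proof -
  have "(\<lambda>k. (-y)^k) sums (1 / (1 - (-y)))"
    by (rule geometric_sums) (use assms in auto)
  then show ?thesis by (simp add: sums_def)
qed

lemma exp_shift:
  fixes z :: complex and w r :: real
  shows "complex_of_real (exp (r * w)) * exp (z * of_real w) = exp ((z + of_real r) * of_real w)"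
proof -
  have "(z + of_real r) * of_real w = z * of_real w + of_real (r * w)" by (simp add: algebra_simps)
  then have "exp ((z + of_real r) * of_real w) = exp (z * of_real w) * exp (of_real (r * w))"
    by (simp only: exp_add)
  then show ?thesis by (simp only: exp_of_real mult.commute)
qed

lemma exp_shift_n:
  fixes z :: complex and w :: real
  shows "complex_of_real (exp (- (real n * w))) * exp (z * of_real w) = exp ((z - of_nat n) * of_real w)"
  using exp_shift[of "- real n" w z] by simp

lemma norm_term:
  fixes z :: complex and g w :: real
  shows "norm (complex_of_real g * exp (z * of_real w)) = \<bar>g\<bar> * exp (Re z * w)"
  by (simp add: norm_mult)

lemma norm_term':
  fixes z :: complex and g w :: real
  shows "norm (- complex_of_real g * exp (z * of_real w)) = \<bar>g\<bar> * exp (Re z * w)"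
  by (simp add: norm_mult)

lemma B_pos:
  fixes u :: real
  shows "B u = - (1 / (1 + exp (- u)))"
  unfolding B_def by (simp add: exp_minus field_simps)

lemma B_neg:
  fixes u :: real
  shows "B u = - (exp u * (1 / (1 + exp u)))"
  unfolding B_def by (simp add: field_simps)

lemma hi_lt:
  fixes f :: "real \<Rightarrow> 'a::banach"
  shows "(f has_integral y) {..b} \<longleftrightarrow> (f has_integral y) {..<b}"
  by (rule has_integral_spike_set_eq; rule negligible_subset[OF negligible_sing[of b]]) auto

lemma hi_gt:
  fixes f :: "real \<Rightarrow> 'a::banach"
  shows "(f has_integral y) {a..b} \<longleftrightarrow> (f has_integral y) {a<..b}"
  by (rule has_integral_spike_set_eq; rule negligible_subset[OF negligible_sing[of a]]) auto

lemma pow_aux: "(- exp (- (lam + w)))^n = (-1)^n * exp (- lam * real n) * exp ((- real n) * (w::real))"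
proof -
  have "(- exp (- (lam + w)))^n = (-1)^n * exp (- (lam + w)) ^ n" by (simp add: power_minus')
  also have "exp (- (lam + w)) ^ n = exp (real n * (- (lam + w)))" by (rule exp_of_nat_mult[symmetric])
  also have "real n * (- (lam + w)) = - lam * real n + (- real n) * w" by (simp add: algebra_simps)
  finally show ?thesis by (simp only: exp_add mult.assoc)
qed

lemma case_neg:
  fixes lam :: real and z :: complex
  assumes lam: "lam > 0" and z: "Re z < 0"
  shows "(\<lambda>n. (-1) ^ n * complex_of_real (exp (- lam * real n)) / (z - of_nat n)) sums
           integral {0..} (\<lambda>w::real. complex_of_real (B (lam + w)) * exp (z * complex_of_real w))"
proof -
  define g where "g w = complex_of_real (B (lam + w)) * exp (z * complex_of_real w)" for w :: real
  define f where "f N w = - complex_of_real (\<Sum>n<N. (- exp (- (lam + w)))^n) * exp (z * complex_of_real w)"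
    for N :: nat and w :: real
  have f_eq: "f N = (\<lambda>w. \<Sum>n<N. - ((-1)^n * complex_of_real (exp (- lam * real n)) *
                         exp ((z - of_nat n) * complex_of_real w)))" for N
  proof
    fix w
    have "(- exp (- (lam + w)))^n = (-1)^n * exp (- lam * real n) * exp ((- real n) * w)" for n
      by (rule pow_aux)
    then have "f N w = - (\<Sum>n<N. complex_of_real ((-1)^n * exp (- lam * real n)) *
                     (complex_of_real (exp ((- real n) * w)) * exp (z * complex_of_real w)))"
      unfolding f_def by (simp add: sum_distrib_right mult.assoc)
    also have "\<dots> = (\<Sum>n<N. - ((-1)^n * complex_of_real (exp (- lam * real n)) *
                         exp ((z - of_nat n) * complex_of_real w)))"
      by (simp add: exp_shift_n sum_negf)
    finally show "f N w = \<dots>" .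
  qed
  have fi: "(f N has_integral (\<Sum>n<N. (-1) ^ n * complex_of_real (exp (- lam * real n)) / (z - of_nat n))) {0..}" for N
  proof -
    have "((\<lambda>w. - ((-1)^n * complex_of_real (exp (- lam * real n)) *
                         exp ((z - of_nat n) * complex_of_real w))) has_integral
           (-1) ^ n * complex_of_real (exp (- lam * real n)) / (z - of_nat n)) {0..}" for n
    proof -
      have "Re (z - of_nat n) < 0" using z by simp
      from has_integral_mult_right[OF exp_int_ge[OF this, of 0], of "(-1)^n * complex_of_real (exp (- lam * real n))"]
      show ?thesis by (subst has_integral_neg_iff) simp
    qed
    then show ?thesis unfolding f_eq by (intro has_integral_sum) auto
  qed
  have hint: "(\<lambda>w. 2 * exp (Re z * w)) integrable_on {0..}"
  proof -
    have h0: "(\<lambda>x. exp (- (- Re z) * x)) integrable_on {0..}"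
      by (rule integrable_on_exp_minus_to_infinity) (use z in simp)
    show ?thesis using integrable_on_cmult_left[OF h0, of 2] by simp
  qed
  have le: "norm (f N w) \<le> 2 * exp (Re z * w)" if "w \<in> {0..}" for N w
  proof -
    have "\<bar>\<Sum>n<N. (- exp (- (lam + w)))^n\<bar> \<le> 2"
      using that lam by (intro geo_bound) auto
    then show ?thesis unfolding f_def norm_term'
      by (intro mult_right_mono) auto
  qed
  have conv: "(\<lambda>N. f N w) \<longlonglongrightarrow> g w" if "w \<in> {0..}" for w
  proof -
    have "(\<lambda>N. \<Sum>n<N. (- exp (- (lam + w)))^n) \<longlonglongrightarrow> 1 / (1 + exp (- (lam + w)))"
      using that lam by (intro geo_lim) auto
    then have "(\<lambda>N. - complex_of_real (\<Sum>n<N. (- exp (- (lam + w)))^n) * exp (z * complex_of_real w))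
        \<longlonglongrightarrow> - complex_of_real (1 / (1 + exp (- (lam + w)))) * exp (z * complex_of_real w)"
      by (intro tendsto_intros) auto
    then show ?thesis unfolding f_def g_def B_pos by simp
  qed
  have "(\<lambda>N. integral {0..} (f N)) \<longlonglongrightarrow> integral {0..} g"
    using dominated_convergence(2)[of f "{0..}" "\<lambda>w. 2 * exp (Re z * w)" g, OF _ hint le conv] fi
    by blast
  moreover have "(\<lambda>N. integral {0..} (f N)) = (\<lambda>N. \<Sum>n<N. (-1) ^ n * complex_of_real (exp (- lam * real n)) / (z - of_nat n))"
    using fi by (intro ext integral_unique) blast
  ultimately show ?thesis unfolding sums_def g_def by simp
qed

lemma ii_lt:
  fixes f :: "real \<Rightarrow> 'a::banach"
  shows "f integrable_on {..b} \<Longrightarrow> f integrable_on {..<b}"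
  using hi_lt unfolding integrable_on_def by blast

lemma ii_gt:
  fixes f :: "real \<Rightarrow> 'a::banach"
  shows "f integrable_on {a..b} \<Longrightarrow> f integrable_on {a<..b}"
  using hi_gt unfolding integrable_on_def by blast

lemma pow_aux2: "exp (lam + w) * (- exp (lam + w))^k = (-1)^k * exp (lam * real (Suc k)) * exp (real (Suc k) * (w::real))"
proof -
  have "exp (lam + w) * (- exp (lam + w))^k = (-1)^k * exp (lam + w) ^ Suc k"
    by (simp add: power_minus')
  also have "exp (lam + w) ^ Suc k = exp (real (Suc k) * (lam + w))" by (rule exp_of_nat_mult[symmetric])
  also have "real (Suc k) * (lam + w) = lam * real (Suc k) + real (Suc k) * w" by (simp add: algebra_simps)
  finally show ?thesis by (simp only: exp_add mult.assoc)
qed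

lemma exp_cancel:
  fixes z :: complex and lam c :: real
  shows "complex_of_real (exp (lam * c)) * exp ((z + of_real c) * complex_of_real (- lam)) = exp (- complex_of_real lam * z)"
proof -
  have "(z + of_real c) * complex_of_real (- lam) = - complex_of_real lam * z + of_real (- (lam * c))"
    by (simp add: algebra_simps)
  then have "exp ((z + of_real c) * complex_of_real (- lam)) = exp (- complex_of_real lam * z) * exp (of_real (- (lam * c)))"
    by (simp only: exp_add)
  moreover have "complex_of_real (exp (lam * c)) * exp (of_real (- (lam * c))) = 1"
    by (simp only: exp_of_real[symmetric] exp_add[symmetric] of_real_add[symmetric]) simp
  ultimately show ?thesis by (simp add: mult.commute mult.left_commute)
qed

lemma case_pos_I1:
  fixes lam :: real and z :: complex
  assumes lam: "lam > 0" and z: "Re z > 0"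
  defines "g \<equiv> (\<lambda>w::real. complex_of_real (B (lam + w)) * exp (z * complex_of_real w))"
  shows "g integrable_on {..<-lam}"
    and "(\<lambda>N. \<Sum>k<N. - (exp (- complex_of_real lam * z) * ((-1)^k / (z + 1 + of_nat k)))) \<longlonglongrightarrow> integral {..<-lam} g"
proof -
  define f where "f N w = - complex_of_real (exp (lam + w) * (\<Sum>k<N. (- exp (lam + w))^k)) * exp (z * complex_of_real w)"
    for N :: nat and w :: real
  have f_eq: "f N = (\<lambda>w. \<Sum>k<N. - ((-1)^k * complex_of_real (exp (lam * real (Suc k))) *
                         exp ((z + of_real (real (Suc k))) * complex_of_real w)))" for N
  proof
    fix w
    have "f N w = - (\<Sum>k<N. complex_of_real ((-1)^k * exp (lam * real (Suc k))) *
                     (complex_of_real (exp (real (Suc k) * w)) * exp (z * complex_of_real w)))"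
      unfolding f_def sum_distrib_left pow_aux2 by (simp add: sum_distrib_right mult.assoc)
    also have "\<dots> = (\<Sum>k<N. - ((-1)^k * complex_of_real (exp (lam * real (Suc k))) *
                         exp ((z + of_real (real (Suc k))) * complex_of_real w)))"
      by (simp add: exp_shift sum_negf)
    finally show "f N w = \<dots>" .
  qed
  have fi: "(f N has_integral (\<Sum>k<N. - (exp (- complex_of_real lam * z) * ((-1)^k / (z + 1 + of_nat k))))) {..<-lam}" for N
  proof -
    have "((\<lambda>w. - ((-1)^k * complex_of_real (exp (lam * real (Suc k))) *
                         exp ((z + of_real (real (Suc k))) * complex_of_real w))) has_integral
           - (exp (- complex_of_real lam * z) * ((-1)^k / (z + 1 + of_nat k)))) {..<-lam}" for k
    proof -
      have "Re (z + of_real (real (Suc k))) > 0" using z by simp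
      from has_integral_mult_right[OF exp_int_le[OF this, of "-lam"], of "(-1)^k * complex_of_real (exp (lam * real (Suc k)))"]
      have "((\<lambda>w. (-1)^k * complex_of_real (exp (lam * real (Suc k))) *
                         exp ((z + of_real (real (Suc k))) * complex_of_real w)) has_integral
           (-1)^k * (complex_of_real (exp (lam * real (Suc k))) * exp ((z + of_real (real (Suc k))) * complex_of_real (- lam))) / (z + of_real (real (Suc k)))) {..-lam}"
        by (simp add: mult.assoc)
      also have "(-1)^k * (complex_of_real (exp (lam * real (Suc k))) * exp ((z + of_real (real (Suc k))) * complex_of_real (- lam))) / (z + of_real (real (Suc k)))
          = exp (- complex_of_real lam * z) * ((-1)^k / (z + 1 + of_nat k))"
        unfolding exp_cancel by (simp add: add.assoc)
      finally show ?thesis by (subst has_integral_neg_iff) (simp add: hi_lt)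
    qed
    then show ?thesis unfolding f_eq by (intro has_integral_sum) auto
  qed
  have hint: "(\<lambda>w. 2 * exp (Re z * w)) integrable_on {..<-lam}"
  proof -
    have h0: "(\<lambda>x. exp (Re z * x)) integrable_on {..-lam}"
      by (rule exp_real_int_le) (use z in simp)
    show ?thesis using integrable_on_cmult_left[OF ii_lt[OF h0], of 2] by simp
  qed
  have le: "norm (f N w) \<le> 2 * exp (Re z * w)" if "w \<in> {..<-lam}" for N w
  proof -
    have "exp (lam + w) \<le> 1" using that by simp
    moreover have "\<bar>\<Sum>n<N. (- exp (lam + w))^n\<bar> \<le> 2"
      using that by (intro geo_bound) auto
    ultimately have "\<bar>exp (lam + w) * (\<Sum>n<N. (- exp (lam + w))^n)\<bar> \<le> 1 * 2"
      unfolding abs_mult by (intro mult_mono) auto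
    then show ?thesis unfolding f_def norm_term'
      by (intro mult_right_mono) auto
  qed
  have conv: "(\<lambda>N. f N w) \<longlonglongrightarrow> g w" if "w \<in> {..<-lam}" for w
  proof -
    have "(\<lambda>N. \<Sum>n<N. (- exp (lam + w))^n) \<longlonglongrightarrow> 1 / (1 + exp (lam + w))"
      using that by (intro geo_lim) auto
    then have "(\<lambda>N. - complex_of_real (exp (lam + w) * (\<Sum>n<N. (- exp (lam + w))^n)) * exp (z * complex_of_real w))
        \<longlonglongrightarrow> - complex_of_real (exp (lam + w) * (1 / (1 + exp (lam + w)))) * exp (z * complex_of_real w)"
      by (intro tendsto_intros) auto
    then show ?thesis unfolding f_def g_def B_neg by simp
  qed
  note dc = dominated_convergence[of f "{..<-lam}" "\<lambda>w. 2 * exp (Re z * w)" g, OF _ hint le conv]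
  show "g integrable_on {..<-lam}" using dc(1) fi by blast
  have "(\<lambda>N. integral {..<-lam} (f N)) \<longlonglongrightarrow> integral {..<-lam} g"
    using dc(2) fi by blast
  moreover have "(\<lambda>N. integral {..<-lam} (f N)) = (\<lambda>N. \<Sum>k<N. - (exp (- complex_of_real lam * z) * ((-1)^k / (z + 1 + of_nat k))))"
    using fi by (intro ext integral_unique) blast
  ultimately show "(\<lambda>N. \<Sum>k<N. - (exp (- complex_of_real lam * z) * ((-1)^k / (z + 1 + of_nat k)))) \<longlonglongrightarrow> integral {..<-lam} g"
    by simp
qed

lemma exp_cancel_n:
  fixes z :: complex and lam :: real
  shows "complex_of_real (exp (- lam * real n)) * exp ((z - of_nat n) * complex_of_real (- lam)) = exp (- complex_of_real lam * z)"
  using exp_cancel[of lam "- real n" z] by simp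

lemma case_pos_I2:
  fixes lam :: real and z :: complex
  assumes lam: "lam > 0" and z: "Re z > 0" and zi: "z \<notin> \<int>"
  defines "g \<equiv> (\<lambda>w::real. complex_of_real (B (lam + w)) * exp (z * complex_of_real w))"
  shows "g integrable_on {-lam<..0}"
    and "(\<lambda>N. \<Sum>n<N. - ((-1) ^ n * complex_of_real (exp (- lam * real n)) / (z - of_nat n)) +
                 exp (- complex_of_real lam * z) * ((-1)^n / (z - of_nat n))) \<longlonglongrightarrow> integral {-lam<..0} g"
proof -
  define f where "f N w = - complex_of_real (\<Sum>n<N. (- exp (- (lam + w)))^n) * exp (z * complex_of_real w)"
    for N :: nat and w :: real
  have f_eq: "f N = (\<lambda>w. \<Sum>n<N. - ((-1)^n * complex_of_real (exp (- lam * real n)) *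
                         exp ((z - of_nat n) * complex_of_real w)))" for N
  proof
    fix w
    have "(- exp (- (lam + w)))^n = (-1)^n * exp (- lam * real n) * exp ((- real n) * w)" for n
      by (rule pow_aux)
    then have "f N w = - (\<Sum>n<N. complex_of_real ((-1)^n * exp (- lam * real n)) *
                     (complex_of_real (exp ((- real n) * w)) * exp (z * complex_of_real w)))"
      unfolding f_def by (simp add: sum_distrib_right mult.assoc)
    also have "\<dots> = (\<Sum>n<N. - ((-1)^n * complex_of_real (exp (- lam * real n)) *
                         exp ((z - of_nat n) * complex_of_real w)))"
      by (simp add: exp_shift_n sum_negf)
    finally show "f N w = \<dots>" .
  qed
  have fi: "(f N has_integral (\<Sum>n<N. - ((-1) ^ n * complex_of_real (exp (- lam * real n)) / (z - of_nat n)) +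
                 exp (- complex_of_real lam * z) * ((-1)^n / (z - of_nat n)))) {-lam<..0}" for N
  proof -
    have "((\<lambda>w. - ((-1)^n * complex_of_real (exp (- lam * real n)) *
                         exp ((z - of_nat n) * complex_of_real w))) has_integral
           (- ((-1) ^ n * complex_of_real (exp (- lam * real n)) / (z - of_nat n)) +
                 exp (- complex_of_real lam * z) * ((-1)^n / (z - of_nat n)))) {-lam<..0}" for n
    proof -
      have nz: "z - of_nat n \<noteq> 0" using zi by (metis Ints_of_nat right_minus_eq)
      from has_integral_mult_right[OF exp_int_interval[OF nz, of "-lam" 0], of "(-1)^n * complex_of_real (exp (- lam * real n))"] lam
      have "((\<lambda>w. (-1)^n * complex_of_real (exp (- lam * real n)) *
                         exp ((z - of_nat n) * complex_of_real w)) has_integral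
           (-1)^n * complex_of_real (exp (- lam * real n)) * ((1 - exp ((z - of_nat n) * complex_of_real (- lam))) / (z - of_nat n))) {-lam..0}"
        by simp
      also have "(-1)^n * complex_of_real (exp (- lam * real n)) * ((1 - exp ((z - of_nat n) * complex_of_real (- lam))) / (z - of_nat n))
          = (-1)^n * complex_of_real (exp (- lam * real n)) / (z - of_nat n) -
            (-1)^n * (complex_of_real (exp (- lam * real n)) * exp ((z - of_nat n) * complex_of_real (- lam))) / (z - of_nat n)"
        by (simp add: algebra_simps diff_divide_distrib)
      also have "\<dots> = (-1)^n * complex_of_real (exp (- lam * real n)) / (z - of_nat n) -
            exp (- complex_of_real lam * z) * ((-1)^n / (z - of_nat n))"
        unfolding exp_cancel_n by simp
      finally show ?thesis by (subst has_integral_neg_iff) (simp add: hi_gt)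
    qed
    then show ?thesis unfolding f_eq by (intro has_integral_sum) auto
  qed
  have hint: "(\<lambda>w. 2 * exp (Re z * w)) integrable_on {-lam<..0}"
    by (intro ii_gt integrable_continuous_interval continuous_intros)
  have le: "norm (f N w) \<le> 2 * exp (Re z * w)" if "w \<in> {-lam<..0}" for N w
  proof -
    have "\<bar>\<Sum>n<N. (- exp (- (lam + w)))^n\<bar> \<le> 2"
      using that by (intro geo_bound) auto
    then show ?thesis unfolding f_def norm_term'
      by (intro mult_right_mono) auto
  qed
  have conv: "(\<lambda>N. f N w) \<longlonglongrightarrow> g w" if "w \<in> {-lam<..0}" for w
  proof -
    have "(\<lambda>N. \<Sum>n<N. (- exp (- (lam + w)))^n) \<longlonglongrightarrow> 1 / (1 + exp (- (lam + w)))"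
      using that by (intro geo_lim) auto
    then have "(\<lambda>N. - complex_of_real (\<Sum>n<N. (- exp (- (lam + w)))^n) * exp (z * complex_of_real w))
        \<longlonglongrightarrow> - complex_of_real (1 / (1 + exp (- (lam + w)))) * exp (z * complex_of_real w)"
      by (intro tendsto_intros) auto
    then show ?thesis unfolding f_def g_def B_pos by simp
  qed
  note dc = dominated_convergence[of f "{-lam<..0}" "\<lambda>w. 2 * exp (Re z * w)" g, OF _ hint le conv]
  show "g integrable_on {-lam<..0}" using dc(1) fi by blast
  have "(\<lambda>N. integral {-lam<..0} (f N)) \<longlonglongrightarrow> integral {-lam<..0} g"
    using dc(2) fi by blast
  moreover have "(\<lambda>N. integral {-lam<..0} (f N)) = (\<lambda>N. \<Sum>n<N. - ((-1) ^ n * complex_of_real (exp (- lam * real n)) / (z - of_nat n)) +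
                 exp (- complex_of_real lam * z) * ((-1)^n / (z - of_nat n)))"
    using fi by (intro ext integral_unique) blast
  ultimately show "(\<lambda>N. \<Sum>n<N. - ((-1) ^ n * complex_of_real (exp (- lam * real n)) / (z - of_nat n)) +
                 exp (- complex_of_real lam * z) * ((-1)^n / (z - of_nat n))) \<longlonglongrightarrow> integral {-lam<..0} g"
    by simp
qed

lemma summable_a:
  fixes lam :: real and z :: complex
  assumes lam: "lam > 0"
  shows "summable (\<lambda>n. (-1) ^ n * complex_of_real (exp (- lam * real n)) / (z - of_nat n))"
proof (rule summable_comparison_test_ev)
  show "summable (\<lambda>n. exp (- lam) ^ n)"
    by (rule summable_geometric) (use lam in simp)
  have "eventually (\<lambda>n. real n \<ge> norm z + 1) sequentially"
    by (meson eventually_sequentiallyI nat_ceiling_le_eq)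
  then show "eventually (\<lambda>n. norm ((-1) ^ n * complex_of_real (exp (- lam * real n)) / (z - of_nat n)) \<le> exp (- lam) ^ n) sequentially"
  proof (rule eventually_mono)
    fix n assume n: "norm z + 1 \<le> real n"
    have "norm (of_nat n :: complex) - norm z \<le> norm (of_nat n - z)"
      by (rule norm_triangle_ineq2)
    then have d: "1 \<le> norm (z - of_nat n)" using n by (simp add: norm_minus_commute)
    have "norm ((-1) ^ n * complex_of_real (exp (- lam * real n)) / (z - of_nat n)) = exp (- lam * real n) / norm (z - of_nat n)"
      by (simp add: norm_divide norm_mult norm_power)
    also have "\<dots> \<le> exp (- lam * real n) / 1"
      using d by (intro divide_left_mono) auto
    finally have *: "norm ((-1) ^ n * complex_of_real (exp (- lam * real n)) / (z - of_nat n)) \<le> exp (- lam * real n)"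
      by simp
    have ee: "exp (- lam * real n) = exp (- lam) ^ n"
      by (simp add: exp_of_nat_mult[symmetric] mult.commute)
    from * show "norm ((-1) ^ n * complex_of_real (exp (- lam * real n)) / (z - of_nat n)) \<le> exp (- lam) ^ n"
      by (simp only: ee)
  qed
qed

lemma case_pos_nonint:
  fixes lam :: real and z :: complex
  assumes lam: "lam > 0" and z: "Re z > 0" and zi: "z \<notin> \<int>"
  shows "A_series lam z = exp (- complex_of_real lam * z) -
              (sin (complex_of_real pi * z) / complex_of_real pi) *
              integral {..0} (\<lambda>w::real. complex_of_real (B (lam + w)) * exp (z * complex_of_real w))"
proof -
  define g where "g = (\<lambda>w::real. complex_of_real (B (lam + w)) * exp (z * complex_of_real w))"
  define a where "a n = (-1) ^ n * complex_of_real (exp (- lam * real n)) / (z - of_nat n)" for n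
  define b where "b n = (-1) ^ n / (z - of_nat n)" for n :: nat
  define c where "c k = (-1) ^ k / (z + 1 + of_nat k)" for k :: nat
  define E where "E = exp (- complex_of_real lam * z)"
  define I1 where "I1 = integral {..<-lam} g"
  define I2 where "I2 = integral {-lam<..0} g"
  define S0 where "S0 = suminf a"
  have E0: "E \<noteq> 0" unfolding E_def by simp
  have aS: "(\<lambda>N. \<Sum>n<N. a n) \<longlonglongrightarrow> S0"
    using summable_a[OF lam, of z] unfolding S0_def a_def by (simp add: summable_LIMSEQ)
  have J1: "(\<lambda>N. \<Sum>k<N. - (E * c k)) \<longlonglongrightarrow> I1"
    using case_pos_I1(2)[OF lam z] unfolding I1_def g_def E_def c_def .
  have J2: "(\<lambda>N. \<Sum>n<N. - a n + E * b n) \<longlonglongrightarrow> I2"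
    using case_pos_I2(2)[OF lam z zi] unfolding I2_def g_def E_def a_def b_def .
  have "(\<lambda>N. (\<Sum>n<N. - a n + E * b n) + (\<Sum>n<N. a n)) \<longlonglongrightarrow> I2 + S0"
    by (rule tendsto_add[OF J2 aS])
  then have "(\<lambda>N. E * (\<Sum>n<N. b n)) \<longlonglongrightarrow> I2 + S0"
    by (simp add: sum.distrib[symmetric] sum_distrib_left)
  then have "(\<lambda>N. E * (\<Sum>n<N. b n) / E) \<longlonglongrightarrow> (I2 + S0) / E"
    by (intro tendsto_intros) (use E0 in auto)
  then have T: "(\<lambda>N. \<Sum>n<N. (-1) ^ n / (z - of_nat n)) \<longlonglongrightarrow> (I2 + S0) / E"
    using E0 by (simp add: b_def)
  have "(\<lambda>N. - (\<Sum>k<N. - (E * c k)) / E) \<longlonglongrightarrow> - I1 / E"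
    by (intro tendsto_intros J1) (use E0 in auto)
  moreover have "(\<lambda>N. - (\<Sum>k<N. - (E * c k)) / E) = (\<lambda>N. \<Sum>k<N. c k)"
    using E0 by (simp add: sum_negf sum_distrib_left[symmetric])
  ultimately have U: "(\<lambda>N. \<Sum>k<N. (-1) ^ k / (z + 1 + of_nat k)) \<longlonglongrightarrow> - I1 / E"
    by (simp add: c_def)
  have TU: "(I2 + S0) / E - (- I1 / E) = of_real pi / sin (of_real pi * z)"
    by (rule csc_final[OF zi T U])
  have s0: "sin (of_real pi * z) \<noteq> 0"
    using zi by (subst sin_eq_0) auto
  have S0v: "S0 = E * of_real pi / sin (of_real pi * z) - (I1 + I2)"
    using TU E0 s0 by (simp add: field_simps)
  have int: "integral {..0} g = I1 + I2"
  proof -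
    have "(g has_integral (I1 + I2)) ({..<-lam} \<union> {-lam<..0})"
      unfolding I1_def I2_def
      by (rule has_integral_Un)
         (use case_pos_I1(1)[OF lam z] case_pos_I2(1)[OF lam z zi] in \<open>auto simp: g_def\<close>,
          subgoal_tac "{..<-lam} \<inter> {-lam<..0} = {}", auto)
    moreover have "(g has_integral (I1 + I2)) ({..<-lam} \<union> {-lam<..0}) \<longleftrightarrow> (g has_integral (I1 + I2)) {..0}"
      by (rule has_integral_spike_set_eq; rule negligible_subset[OF negligible_sing[of "-lam"]]) (use lam in auto)
    ultimately show ?thesis by (simp add: integral_unique)
  qed
  have "A_series lam z = (sin (complex_of_real pi * z) / complex_of_real pi) * S0"
    unfolding A_series_def S0_def a_def ..
  also have "\<dots> = E - (sin (complex_of_real pi * z) / complex_of_real pi) * integral {..0} g"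
    unfolding S0v int using s0 by (simp add: field_simps)
  finally show ?thesis unfolding E_def g_def .
qed

lemma B_abs_le: "\<bar>B u\<bar> \<le> 1"
proof -
  have p: "exp u + 1 > 0" by (smt (verit) exp_gt_zero)
  have "exp u / (exp u + 1) \<le> 1" using p by (simp add: divide_le_eq)
  then show ?thesis unfolding B_def using p by (simp add: abs_div_pos)
qed

lemma contB:
  fixes z :: complex
  shows "continuous_on S (\<lambda>w::real. complex_of_real (B (lam + w)) * exp (z * complex_of_real w))"
proof -
  have "\<And>w. exp (lam + w) + 1 \<noteq> 0" by (smt (verit) exp_gt_zero)
  then show ?thesis unfolding B_def by (intro continuous_intros) auto
qed

lemma I_cont:
  fixes lam :: real and z0 :: complex
  assumes z0: "Re z0 > 0"
  shows "isCont (\<lambda>z. integral {..0} (\<lambda>w::real. complex_of_real (B (lam + w)) * exp (z * complex_of_real w))) z0"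
proof (rule continuous_at_sequentiallyI)
  fix u :: "nat \<Rightarrow> complex" assume u: "u \<longlonglongrightarrow> z0"
  define d where "d = Re z0 / 2"
  have d: "d > 0" "d < Re z0" using z0 by (auto simp: d_def)
  have "(\<lambda>n. Re (u n)) \<longlonglongrightarrow> Re z0" by (intro tendsto_intros u)
  then have "eventually (\<lambda>n. Re (u n) > d) sequentially" using d by (simp add: order_tendstoD)
  then obtain K where K: "\<And>n. n \<ge> K \<Longrightarrow> Re (u n) > d" by (auto simp: eventually_sequentially)
  define v where "v n = u (n + K)" for n
  have vK: "Re (v n) > d" for n unfolding v_def by (rule K) simp
  have v: "v \<longlonglongrightarrow> z0" unfolding v_def by (rule LIMSEQ_ignore_initial_segment[OF u])
  define f where "f n w = complex_of_real (B (lam + w)) * exp (v n * complex_of_real w)" for n and w :: real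
  define g where "g w = complex_of_real (B (lam + w)) * exp (z0 * complex_of_real w)" for w :: real
  have hint: "(\<lambda>w. exp (d * w)) integrable_on {..0::real}"
    by (rule exp_real_int_le) (use d in simp)
  have le: "norm (f n w) \<le> exp (d * w)" if "w \<in> {..0}" for n w
  proof -
    have "Re (v n) * w \<le> d * w" using that vK[of n] by (intro mult_right_mono_neg) auto
    then have "exp (Re (v n) * w) \<le> exp (d * w)" by simp
    moreover have "\<bar>B (lam + w)\<bar> \<le> 1" by (rule B_abs_le)
    ultimately have "\<bar>B (lam + w)\<bar> * exp (Re (v n) * w) \<le> 1 * exp (d * w)"
      by (intro mult_mono) auto
    then show ?thesis unfolding f_def norm_term by simp
  qed
  have fint: "f n integrable_on {..0}" for n
  proof (rule measurable_bounded_by_integrable_imp_integrable[OF _ hint])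
    show "f n \<in> borel_measurable (lebesgue_on {..0})"
      unfolding f_def by (intro continuous_imp_measurable_on_sets_lebesgue contB) auto
    show "{..0::real} \<in> sets lebesgue" by auto
  qed (rule le)
  have conv: "(\<lambda>n. f n w) \<longlonglongrightarrow> g w" if "w \<in> {..0}" for w
    unfolding f_def g_def by (intro tendsto_intros v)
  have "(\<lambda>n. integral {..0} (f n)) \<longlonglongrightarrow> integral {..0} g"
    using dominated_convergence(2)[of f "{..0}" "\<lambda>w. exp (d * w)" g, OF fint hint le conv] .
  then have "(\<lambda>n. integral {..0} (\<lambda>w::real. complex_of_real (B (lam + w)) * exp (u (n + K) * complex_of_real w)))
       \<longlonglongrightarrow> integral {..0} (\<lambda>w::real. complex_of_real (B (lam + w)) * exp (z0 * complex_of_real w))"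
    unfolding f_def g_def v_def .
  then show "(\<lambda>n. integral {..0} (\<lambda>w::real. complex_of_real (B (lam + w)) * exp (u n * complex_of_real w)))
       \<longlonglongrightarrow> integral {..0} (\<lambda>w::real. complex_of_real (B (lam + w)) * exp (z0 * complex_of_real w))"
    by (rule LIMSEQ_offset)
qed

lemma case_pos:
  fixes lam :: real and z :: complex
  assumes lam: "lam > 0" and z: "Re z > 0"
  shows "A lam z = exp (- complex_of_real lam * z) -
              (sin (complex_of_real pi * z) / complex_of_real pi) *
              integral {..0} (\<lambda>w::real. complex_of_real (B (lam + w)) * exp (z * complex_of_real w))"
proof -
  define G where "G t = exp (- complex_of_real lam * t) -
              (sin (complex_of_real pi * t) / complex_of_real pi) *
              integral {..0} (\<lambda>w::real. complex_of_real (B (lam + w)) * exp (t * complex_of_real w))" for t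
  show ?thesis
  proof (cases "z \<in> \<int>")
    case False
    then have "z \<notin> range (of_nat :: nat \<Rightarrow> complex)" by auto
    then have "A lam z = A_series lam z" by (simp add: A_def)
    with case_pos_nonint[OF lam z False] show ?thesis by simp
  next
    case True
    then obtain k :: int where k: "z = of_int k" by (auto elim: Ints_cases)
    have "0 < Re z" by (rule z)
    then have kpos: "k > 0" using k by simp
    define m where "m = nat k"
    have zm: "z = of_nat m" using k kpos by (simp add: m_def)
    then have zr: "z \<in> range (of_nat :: nat \<Rightarrow> complex)" by auto
    have cont: "isCont G z"
      unfolding G_def by (intro continuous_intros I_cont z) auto
    have ev: "eventually (\<lambda>t. G t = A_series lam t) (at z)"
    proof -
      have "eventually (\<lambda>t. t \<in> ball z (1/2)) (at z)"
        by (intro eventually_at_in_open' open_ball) auto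
      moreover have "eventually (\<lambda>t. t \<noteq> z) (at z)"
        by (rule eventually_neq_at_within)
      ultimately show ?thesis
      proof eventually_elim
        case (elim t)
        have dtz: "norm (t - z) < 1/2" using elim(1) by (simp add: dist_norm norm_minus_commute)
        have "Re z - Re t \<le> norm (t - z)"
          using abs_Re_le_cmod[of "t - z"] by simp
        then have tre: "Re t > 0" using dtz zm kpos by (simp add: m_def)
        have tni: "t \<notin> \<int>"
        proof
          assume "t \<in> \<int>"
          then obtain j :: int where j: "t = of_int j" by (auto elim: Ints_cases)
          have "norm (t - z) = \<bar>real_of_int (j - k)\<bar>"
            unfolding j k by (simp only: of_int_diff[symmetric] norm_of_int)
          with dtz have "\<bar>real_of_int (j - k)\<bar> < 1/2" by simp
          then have "j = k" by linarith
          with elim(2) j k show False by simp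
        qed
        show ?case using case_pos_nonint[OF lam tre tni] by (simp add: G_def)
      qed
    qed
    have "(A_series lam \<longlongrightarrow> G z) (at z)"
      using Lim_transform_eventually[OF _ ev] cont by (simp add: isCont_def)
    then have "Lim (at z) (A_series lam) = G z"
      by (rule tendsto_Lim[rotated]) simp
    then show ?thesis using zr by (simp add: A_def G_def)
  qed
qed

theorem lemma2p1:
  fixes lam :: real and z :: complex
  assumes "lam > 0"
  shows "(Re z < 0 \<longrightarrow>
            A lam z = (sin (complex_of_real pi * z) / complex_of_real pi) *
              integral {0..} (\<lambda>w::real. complex_of_real (B (lam + w)) * exp (z * complex_of_real w)))
       \<and> (Re z > 0 \<longrightarrow>
            A lam z = exp (- complex_of_real lam * z) -
              (sin (complex_of_real pi * z) / complex_of_real pi) *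
              integral {..0} (\<lambda>w::real. complex_of_real (B (lam + w)) * exp (z * complex_of_real w)))"
proof (intro conjI impI)
  assume z: "Re z < 0"
  then have "z \<notin> range (of_nat :: nat \<Rightarrow> complex)" by auto
  then have "A lam z = A_series lam z" by (simp add: A_def)
  also have "\<dots> = (sin (complex_of_real pi * z) / complex_of_real pi) *
              integral {0..} (\<lambda>w::real. complex_of_real (B (lam + w)) * exp (z * complex_of_real w))"
    unfolding A_series_def using case_neg[OF assms z] by (simp add: sums_iff)
  finally show "A lam z = (sin (complex_of_real pi * z) / complex_of_real pi) *
              integral {0..} (\<lambda>w::real. complex_of_real (B (lam + w)) * exp (z * complex_of_real w))" .
next
  assume z: "Re z > 0"
  show "A lam z = exp (- complex_of_real lam * z) -
              (sin (complex_of_real pi * z) / complex_of_real pi) *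
              integral {..0} (\<lambda>w::real. complex_of_real (B (lam + w)) * exp (z * complex_of_real w))"
    by (rule case_pos[OF assms z])
qed

end
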